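(* For any $\eta\in(0,\tfrac12)$ and any sequence of true labels $y_1,\dots,y_T$ (and expert advice), the probabilities $p_1,\dots,p_T$ and estimated losses $\hat\ell_1,\dots,\hat\ell_T$ produced by EXP4.AT with learning rate $\eta$ satisfy $$\sum_{t=1}^T\sum_{y\in\{0,1\}}p_t^y\hat\ell_t(y) - \inf_{j\in[N]}\sum_{t=1}^T\hat\ell_t(\mathcal{E}^j_t) \le \frac{\ln N}{\eta} + \eta\sum_{t=1}^T\hat\ell_t(1) + \eta\sum_{t=1}^T p_t^1(1-p_t^1)\hat\ell_t(0)^2 + \eta\sum_{t=1}^T p_t^1\hat\ell_t(1)^2.$$
   Context: Binary prediction with $N$ experts under apple tasting feedback. EXP4.AT with learning rate $\eta\in(0,\tfrac12)$: let $q_1$ be uniform on $[N]$. In each round $t=1,\dots,T$: receive advice $\mathcal{E}^1_t,\dots,\mathcal{E}^N_t\in\{0,1\}$; set $p_t^1=(1-\eta)\sum_{i=1}^N q_t^i\mathcal{E}^i_t+\eta$ and $p_t^0=1-p_t^1$; predict $\hat y_t=1$ with probability $p_t^1$ and $\hat y_t=0$ otherwise; the true label $y_t$ is observed only if $\hat y_t=1$; define $\hat\ell_t(y)=\mathbb{1}\{y\ne y_t\}\mathbb{1}\{\hat y_t=1\}/p_t^1$ for $y\in\{0,1\}$; update $q_{t+1}^i=\frac{q_t^i\exp(-\eta\hat\ell_t(\mathcal{E}^i_t))}{\sum_{j=1}^N q_t^j\exp(-\eta\hat\ell_t(\mathcal{E}^j_t))}$. The inequality holds for every realization of the algorithm's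 random predictions. *)

theory Defs
  imports Complex_Main
begin

(* Rounds are indexed t = 0,...,T-1 (round t here is round t+1 of the paper);
   experts are indexed i = 0,...,N-1; labels/advice/predictions in {0,1} are
   represented as bool (True = 1). *)

definition ind :: "bool \<Rightarrow> real" where
  "ind b = (if b then 1 else 0)"

definition exp4at_prob1 :: "real \<Rightarrow> nat \<Rightarrow> (nat \<Rightarrow> bool) \<Rightarrow> (nat \<Rightarrow> real) \<Rightarrow> real" where
  "exp4at_prob1 eta N Et qv = (1 - eta) * (\<Sum>i<N. qv i * ind (Et i)) + eta"

definition exp4at_lhat :: "bool \<Rightarrow> bool \<Rightarrow> real \<Rightarrow> bool \<Rightarrow> real" where
  "exp4at_lhat yt yht p1 b = ind (b \<noteq> yt) * ind yht / p1"

(* weights q_t of EXP4.AT; E t i = advice of expert i in round t, y t = true label,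
   yh t = realized prediction *)
fun exp4at_q :: "real \<Rightarrow> nat \<Rightarrow> (nat \<Rightarrow> nat \<Rightarrow> bool) \<Rightarrow> (nat \<Rightarrow> bool) \<Rightarrow> (nat \<Rightarrow> bool)
                  \<Rightarrow> nat \<Rightarrow> nat \<Rightarrow> real" where
  "exp4at_q eta N E y yh 0 = (\<lambda>i. 1 / real N)"
| "exp4at_q eta N E y yh (Suc t) =
     (let q = exp4at_q eta N E y yh t;
          p = exp4at_prob1 eta N (E t) q;
          l = exp4at_lhat (y t) (yh t) p;
          Z = (\<Sum>j<N. q j * exp (- eta * l (E t j)))
      in (\<lambda>i. q i * exp (- eta * l (E t i)) / Z))"

definition exp4at_p :: "real \<Rightarrow> nat \<Rightarrow> (nat \<Rightarrow> nat \<Rightarrow> bool) \<Rightarrow> (nat \<Rightarrow> bool) \<Rightarrow> (nat \<Rightarrow> bool)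
                  \<Rightarrow> nat \<Rightarrow> real" where
  "exp4at_p eta N E y yh t = exp4at_prob1 eta N (E t) (exp4at_q eta N E y yh t)"

definition exp4at_l :: "real \<Rightarrow> nat \<Rightarrow> (nat \<Rightarrow> nat \<Rightarrow> bool) \<Rightarrow> (nat \<Rightarrow> bool) \<Rightarrow> (nat \<Rightarrow> bool)
                  \<Rightarrow> nat \<Rightarrow> bool \<Rightarrow> real" where
  "exp4at_l eta N E y yh t b = exp4at_lhat (y t) (yh t) (exp4at_p eta N E y yh t) b"

end

theory Submission
  imports Defs
begin

lemma expneg_bound:
  fixes x :: real assumes "0 \<le> x" shows "exp (-x) \<le> 1 - x + x^2/2"
proof -
  have a: "1 + x + x^2/2 \<le> exp x" using exp_lower_Taylor_quadratic[OF assms] by simp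
  have "0 \<le> x^2/2" by simp
  hence pos: "0 < 1 + x + x^2/2" using assms by linarith
  have "(1 - x + x^2/2) * (1 + x + x^2/2) = 1 + x^4/4" by (simp add: algebra_simps power2_eq_square power4_eq_xxxx)
  hence b: "1 \<le> (1 - x + x^2/2) * (1 + x + x^2/2)" by simp
  have "exp (-x) = 1 / exp x" by (simp add: exp_minus field_simps)
  also have "\<dots> \<le> 1 / (1 + x + x^2/2)" using a pos by (intro divide_left_mono) auto
  also have "\<dots> \<le> 1 - x + x^2/2" using b pos by (simp add: divide_le_eq mult.commute)
  finally show ?thesis .
qed

lemma round_y0:
  fixes eta Q p :: real
  assumes e: "0 < eta" "eta < 1/2" and Q: "0 \<le> Q" "Q \<le> 1" and hp: "p = (1-eta)*Q + eta"
  shows "1 + ln (Q * exp (-(eta/p)) + (1 - Q)) / eta \<le> 2*eta/p"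
proof -
  have "0 \<le> (1-eta)*Q" using e Q by simp
  hence p: "eta \<le> p" "p > 0" using hp e by auto
  have "p - Q = eta*(1-Q)" using hp by (simp add: algebra_simps)
  moreover have "0 \<le> eta*(1-Q)" using e Q by simp
  ultimately have Qp: "Q \<le> p" by linarith
  define x where "x = eta / p"
  have x0: "0 \<le> x" using p e by (simp add: x_def)
  have ex: "exp (-x) \<le> 1 - x + x^2/2" by (rule expneg_bound[OF x0])
  have Zpos: "0 < Q * exp (-x) + (1 - Q)"
  proof (cases "Q = 0")
    case True then show ?thesis by simp
  next
    case False
    then have "0 < Q * exp (-x)" using Q by simp
    then show ?thesis using Q by linarith
  qed
  have "ln (Q * exp (-x) + (1 - Q)) \<le> Q * (exp (-x) - 1)"
    using ln_le_minus_one[OF Zpos] by (simp add: algebra_simps)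
  also have "\<dots> \<le> Q * (- x + x^2/2)" using ex Q by (intro mult_left_mono) auto
  finally have L: "ln (Q * exp (-x) + (1 - Q)) / eta \<le> Q * (- x + x^2/2) / eta"
    using e by (simp add: divide_right_mono)
  have eq: "Q * (- x + x^2/2) / eta = - Q / p + Q * eta / (2*p^2)"
    using e p by (simp add: x_def field_simps power2_eq_square)
  have k1: "1 - Q / p = eta * (1 - Q) / p" using p hp by (simp add: field_simps)
  have k2: "Q * eta / (2*p^2) \<le> eta / (2*p)"
  proof -
    have "Q * eta / (2*p^2) = (Q/p) * (eta / (2*p))" by (simp add: power2_eq_square field_simps)
    also have "\<dots> \<le> 1 * (eta / (2*p))" using Qp p e Q by (intro mult_right_mono) auto
    finally show ?thesis by simp
  qed
  have k3: "eta * (1 - Q) / p \<le> eta / p" using e p Q by (simp add: divide_right_mono)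
  have "eta / (2*p) \<le> eta / p" using e p by (simp add: field_simps)
  hence "1 + ln (Q * exp (-x) + (1 - Q)) / eta \<le> 2*eta/p"
  proof -
    have "1 + ln (Q * exp (-x) + (1 - Q)) / eta \<le> (1 - Q / p) + Q * eta / (2*p^2)"
      using L eq by simp
    also have "\<dots> \<le> eta / p + eta / p" using k1 k2 k3 \<open>eta / (2*p) \<le> eta / p\<close> by linarith
    finally show ?thesis by simp
  qed
  then show ?thesis by (simp add: x_def)
qed

lemma round_y1:
  fixes eta Q p :: real
  assumes e: "0 < eta" "eta < 1/2" and Q: "0 \<le> Q" "Q \<le> 1" and hp: "p = (1-eta)*Q + eta"
  shows "(1-p)/p + ln (Q + (1 - Q) * exp (-(eta/p))) / eta \<le> eta*(1-p)/p"
proof -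
  have "0 \<le> (1-eta)*Q" using e Q by simp
  hence p: "eta \<le> p" "p > 0" using hp e by auto
  have pQ: "p - Q = eta*(1-Q)" using hp by (simp add: algebra_simps)
  have omp: "1 - p = (1-eta)*(1-Q)" using hp by (simp add: algebra_simps)
  have "0 \<le> (1-eta)*(1-Q)" using e Q by simp
  hence p1: "p \<le> 1" using omp by linarith
  define x where "x = eta / p"
  have x0: "0 \<le> x" using p e by (simp add: x_def)
  have x1: "x \<le> 1" using p e by (simp add: x_def)
  have Zpos: "0 < Q + (1 - Q) * exp (-x)"
  proof (cases "Q = 1")
    case True then show ?thesis by simp
  next
    case False
    then have "0 < (1-Q) * exp (-x)" using Q by simp
    then show ?thesis using Q by linarith
  qed
  show ?thesis
  proof (cases "p \<ge> 1/3")
    case True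
    have ex: "exp (-x) \<le> 1 - x + x^2/2" by (rule expneg_bound[OF x0])
    have "ln (Q + (1 - Q) * exp (-x)) \<le> (1 - Q) * (exp (-x) - 1)"
      using ln_le_minus_one[OF Zpos] by (simp add: algebra_simps)
    also have "\<dots> \<le> (1 - Q) * (- x + x^2/2)" using ex Q by (intro mult_left_mono) auto
    finally have L: "ln (Q + (1 - Q) * exp (-x)) / eta \<le> (1 - Q) * (- x + x^2/2) / eta"
      using e by (simp add: divide_right_mono)
    define c where "c = (1-Q)*eta/p"
    have c0: "0 \<le> c" using Q e p by (simp add: c_def)
    have eq: "(1-p)/p + (1 - Q) * (- x + x^2/2) / eta = c * (-1 + 1/(2*p))"
    proof -
      have "(1-p)/p + (1 - Q) * (- x + x^2/2) / eta = (1-p)/p - (1-Q)/p + (1-Q)*eta/(2*p^2)"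
        using e p by (simp add: x_def field_simps power2_eq_square)
      also have "(1-p)/p - (1-Q)/p = (Q - p)/p" by (simp add: diff_divide_distrib)
      also have "Q - p = -((1-Q)*eta)" using pQ by (simp add: algebra_simps)
      also have "-((1-Q)*eta) / p = - c" by (simp add: c_def)
      also have "(1-Q)*eta/(2*p^2) = c * (1/(2*p))" using p by (simp add: c_def power2_eq_square field_simps)
      finally show ?thesis by (simp add: algebra_simps)
    qed
    have "1/(2*p) \<le> 3/2" using True p by (simp add: field_simps)
    hence "-1 + 1/(2*p) \<le> 1 - eta" using e by linarith
    hence "c * (-1 + 1/(2*p)) \<le> c * (1 - eta)" using c0 by (rule mult_left_mono)
    also have "c * (1 - eta) = eta*((1-eta)*(1-Q))/p" by (simp add: c_def algebra_simps)
    also have "\<dots> = eta*(1-p)/p" using omp by simp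
    finally have "(1-p)/p + ln (Q + (1 - Q) * exp (-x)) / eta \<le> eta*(1-p)/p"
      using L eq by linarith
    then show ?thesis by (simp add: x_def)
  next
    case False
    have ex: "exp x \<le> 1 + x + x^2" by (rule exp_bound[OF x0 x1])
    have Zeq: "Q + (1 - Q) * exp (-x) = exp (-x) * (Q * exp x + (1 - Q))"
      by (simp add: algebra_simps exp_minus_inverse)
    have Wpos: "0 < Q * exp x + (1 - Q)"
      using Zpos Zeq by (metis exp_gt_zero zero_less_mult_pos)
    have "ln (Q + (1 - Q) * exp (-x)) = -x + ln (Q * exp x + (1 - Q))"
      using Zeq Wpos by (simp add: ln_mult)
    also have "ln (Q * exp x + (1 - Q)) \<le> Q * (exp x - 1)"
      using ln_le_minus_one[OF Wpos] by (simp add: algebra_simps)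
    also have "\<dots> \<le> Q * (x + x^2)" using ex Q by (intro mult_left_mono) auto
    finally have L0: "ln (Q + (1 - Q) * exp (-x)) \<le> -x + Q * (x + x^2)" by simp
    have L: "ln (Q + (1 - Q) * exp (-x)) / eta \<le> (-x + Q * (x + x^2)) / eta"
      using L0 e by (simp add: divide_right_mono)
    have eq: "(1-p)/p + (-x + Q * (x + x^2)) / eta = (- (p^2) + Q*p + Q*eta) / p^2"
      using e p by (simp add: x_def field_simps power2_eq_square)
    have k: "(1-eta) * (- (p^2) + Q*p + Q*eta) = eta*p^2 - eta^2"
    proof -
      have "(1-eta) * (- (p^2) + Q*p + Q*eta) = -(1-eta)*p^2 + ((1-eta)*Q)*(p+eta)"
        by (simp add: algebra_simps)
      also have "(1-eta)*Q = p - eta" using hp by simp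
      finally show ?thesis by (simp add: algebra_simps power2_eq_square)
    qed
    have pp: "p^2 \<le> p/3" using False p by (simp add: power2_eq_square)
    have "1/3 \<le> (1-eta)*(1-p)"
    proof -
      have "(1/2)*(2/3) \<le> (1-eta)*(1-p)" using e False by (intro mult_mono) auto
      then show ?thesis by simp
    qed
    hence "p * (1/3) \<le> p * ((1-eta)*(1-p))" using p by (intro mult_left_mono) auto
    hence "p^2 - eta \<le> (1-eta)*p*(1-p)" using pp e by (simp add: algebra_simps)
    hence "eta*(p^2 - eta) \<le> eta*((1-eta)*p*(1-p))" using e by (intro mult_left_mono) auto
    hence "(1-eta) * (- (p^2) + Q*p + Q*eta) \<le> (1-eta) * (eta*p*(1-p))"
      using k by (simp add: algebra_simps power2_eq_square)
    hence "- (p^2) + Q*p + Q*eta \<le> eta*p*(1-p)" using e by simp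
    hence "(- (p^2) + Q*p + Q*eta) / p^2 \<le> eta*p*(1-p) / p^2" using p by (simp add: divide_right_mono)
    also have "eta*p*(1-p) / p^2 = eta*(1-p)/p" using p by (simp add: power2_eq_square)
    finally have "(1-p)/p + ln (Q + (1 - Q) * exp (-x)) / eta \<le> eta*(1-p)/p"
      using L eq by linarith
    then show ?thesis by (simp add: x_def)
  qed
qed

lemma round_bound:
  fixes eta :: real and N :: nat and q :: "nat \<Rightarrow> real" and Et :: "nat \<Rightarrow> bool" and yt yht :: bool
  assumes e: "0 < eta" "eta < 1/2" and q0: "\<And>i. i < N \<Longrightarrow> 0 \<le> q i" and q1: "(\<Sum>i<N. q i) = 1"
  defines "p \<equiv> exp4at_prob1 eta N Et q"
  defines "l \<equiv> exp4at_lhat yt yht p"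
  defines "Z \<equiv> (\<Sum>j<N. q j * exp (- eta * l (Et j)))"
  shows "(\<Sum>b\<in>{False, True}. (if b then p else 1 - p) * l b) + ln Z / eta
         \<le> eta * l True + eta * (p * (1 - p) * (l False)^2) + eta * (p * (l True)^2)"
proof -
  define Q where "Q = (\<Sum>i<N. q i * ind (Et i))"
  have Q0: "0 \<le> Q" unfolding Q_def using q0 by (intro sum_nonneg) (simp add: ind_def)
  have "Q \<le> (\<Sum>i<N. q i)" unfolding Q_def using q0 by (intro sum_mono) (simp add: ind_def)
  hence Q1: "Q \<le> 1" using q1 by simp
  have hp: "p = (1-eta)*Q + eta" by (simp add: p_def exp4at_prob1_def Q_def)
  have Zeq: "Z = Q * exp (- eta * l True) + (1 - Q) * exp (- eta * l False)"
  proof -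
    have "Z = (\<Sum>j<N. q j * ind (Et j) * exp (- eta * l True) + (q j - q j * ind (Et j)) * exp (- eta * l False))"
      unfolding Z_def by (intro sum.cong) (auto simp: ind_def)
    also have "\<dots> = Q * exp (- eta * l True) + ((\<Sum>j<N. q j) - Q) * exp (- eta * l False)"
      by (simp add: sum.distrib sum_distrib_right[symmetric] sum_subtractf Q_def)
    finally show ?thesis using q1 by simp
  qed
  have sumb: "(\<Sum>b\<in>{False, True}. (if b then p else 1 - p) * l b) = (1-p) * l False + p * l True"
    by simp
  show ?thesis
  proof (cases yht)
    case False
    then have "l b = 0" for b by (simp add: l_def exp4at_lhat_def ind_def)
    then show ?thesis using Zeq sumb by simp
  next
    case yh: True
    have "0 \<le> (1-eta)*Q" using e Q0 Q1 by simp
    hence ppos: "0 < p" using hp e by linarith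
    show ?thesis
    proof (cases yt)
      case True
      have lT: "l True = 0" and lF: "l False = 1/p" using True yh by (simp_all add: l_def exp4at_lhat_def ind_def)
      have Z': "Z = Q + (1 - Q) * exp (-(eta/p))" using Zeq lT lF by simp
      have "(1-p)/p + ln (Q + (1 - Q) * exp (-(eta/p))) / eta \<le> eta*(1-p)/p"
        by (rule round_y1[OF e Q0 Q1 hp])
      moreover have "eta * (p * (1 - p) * (1/p)^2) = eta*(1-p)/p" using ppos by (simp add: power2_eq_square)
      ultimately show ?thesis using sumb lT lF Z' by simp
    next
      case False
      have lT: "l True = 1/p" and lF: "l False = 0" using False yh by (simp_all add: l_def exp4at_lhat_def ind_def)
      have Z': "Z = Q * exp (-(eta/p)) + (1 - Q)" using Zeq lT lF by simp
      have "1 + ln (Q * exp (-(eta/p)) + (1 - Q)) / eta \<le> 2*eta/p"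
        by (rule round_y0[OF e Q0 Q1 hp])
      moreover have "eta * (p * (1/p)^2) = eta/p" using ppos by (simp add: power2_eq_square)
      moreover have "p * (1/p) = 1" using ppos by simp
      ultimately show ?thesis using sumb lT lF Z' by simp
    qed
  qed
qed

lemma q_Suc:
  "exp4at_q eta N E y yh (Suc t) = (\<lambda>i. exp4at_q eta N E y yh t i * exp (- eta * exp4at_l eta N E y yh t (E t i))
      / (\<Sum>j<N. exp4at_q eta N E y yh t j * exp (- eta * exp4at_l eta N E y yh t (E t j))))"
  by (simp add: Let_def exp4at_l_def exp4at_p_def)

lemma q_inv:
  assumes "N \<ge> 1"
  shows "(\<forall>i<N. 0 < exp4at_q eta N E y yh t i) \<and> (\<Sum>i<N. exp4at_q eta N E y yh t i) = 1"
proof (induction t)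
  case 0
  then show ?case using assms by simp
next
  case (Suc t)
  let ?q = "exp4at_q eta N E y yh t"
  let ?Z = "\<Sum>j<N. ?q j * exp (- eta * exp4at_l eta N E y yh t (E t j))"
  have "0 < ?Z"
  proof (rule sum_pos)
    show "{..<N} \<noteq> {}" using assms by (auto simp: lessThan_empty_iff)
  qed (use Suc in auto)
  then show ?case using Suc unfolding q_Suc by (simp add: sum_divide_distrib[symmetric])
qed

theorem lemma6:
  fixes eta :: real and N T :: nat
    and E :: "nat \<Rightarrow> nat \<Rightarrow> bool" and y yh :: "nat \<Rightarrow> bool"
  assumes "0 < eta" and "eta < 1/2" and "N \<ge> 1"
  shows "(\<Sum>t<T. \<Sum>b\<in>{False, True}.
            (if b then exp4at_p eta N E y yh t else 1 - exp4at_p eta N E y yh t)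
              * exp4at_l eta N E y yh t b)
         - (INF j\<in>{..<N}. \<Sum>t<T. exp4at_l eta N E y yh t (E t j))
         \<le> ln (real N) / eta
           + eta * (\<Sum>t<T. exp4at_l eta N E y yh t True)
           + eta * (\<Sum>t<T. exp4at_p eta N E y yh t * (1 - exp4at_p eta N E y yh t)
                               * (exp4at_l eta N E y yh t False)^2)
           + eta * (\<Sum>t<T. exp4at_p eta N E y yh t * (exp4at_l eta N E y yh t True)^2)"
proof -
  define q where "q = exp4at_q eta N E y yh"
  define p where "p = exp4at_p eta N E y yh"
  define l where "l = exp4at_l eta N E y yh"
  define Z where "Z t = (\<Sum>j<N. q t j * exp (- eta * l t (E t j)))" for t
  define A where "A t = (\<Sum>b\<in>{False, True}. (if b then p t else 1 - p t) * l t b)" for t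
  define R where "R t = eta * l t True + eta * (p t * (1 - p t) * (l t False)^2) + eta * (p t * (l t True)^2)" for t
  have qi: "\<And>t i. i < N \<Longrightarrow> 0 < q t i" and qs: "\<And>t. (\<Sum>i<N. q t i) = 1"
    using q_inv[OF assms(3)] unfolding q_def by blast+
  have Zpos: "0 < Z t" for t
    unfolding Z_def using qi assms(3) by (intro sum_pos) (auto simp: lessThan_empty_iff)
  have rnd: "A t + ln (Z t) / eta \<le> R t" for t
  proof -
    have "p t = exp4at_prob1 eta N (E t) (q t)" by (simp add: p_def q_def exp4at_p_def)
    moreover have "l t = exp4at_lhat (y t) (yh t) (p t)" by (simp add: l_def p_def exp4at_l_def fun_eq_iff)
    ultimately show ?thesis
      unfolding A_def R_def Z_def
      using round_bound[OF assms(1,2), of N "q t" "E t" "y t" "yh t"] qi qs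
      by (simp add: less_imp_le)
  qed
  have tele: "ln (q t j) = - ln (real N) - eta * (\<Sum>s<t. l s (E s j)) - (\<Sum>s<t. ln (Z s))" if j: "j < N" for j t
  proof (induction t)
    case 0
    then show ?case using assms(3) by (simp add: q_def ln_div)
  next
    case (Suc t)
    have "q (Suc t) j = q t j * exp (- eta * l t (E t j)) / Z t"
      unfolding q_def l_def Z_def by (subst q_Suc) (simp add: q_def l_def)
    hence "ln (q (Suc t) j) = ln (q t j) + (- eta * l t (E t j)) - ln (Z t)"
    proof -
      have a: "0 < q t j" using qi[OF j] .
      have b: "0 < Z t" using Zpos .
      have "ln (q t j * exp (- eta * l t (E t j)) / Z t) = ln (q t j * exp (- eta * l t (E t j))) - ln (Z t)"
        using a b by (intro ln_divide_pos) auto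
      also have "ln (q t j * exp (- eta * l t (E t j))) = ln (q t j) + ln (exp (- eta * l t (E t j)))"
        using a by (intro ln_mult_pos) auto
      finally show ?thesis using \<open>q (Suc t) j = _\<close> by simp
    qed
    then show ?case using Suc by (simp add: algebra_simps)
  qed
  have key: "(\<Sum>t<T. A t) - (\<Sum>t<T. l t (E t j)) \<le> ln (real N) / eta + (\<Sum>t<T. R t)" if j: "j < N" for j
  proof -
    have "q T j \<le> (\<Sum>i<N. q T i)"
      using j qi by (intro member_le_sum) (auto simp: less_imp_le)
    hence "q T j \<le> 1" using qs by simp
    hence "ln (q T j) \<le> 0" using qi[OF j] by simp
    hence L: "- (\<Sum>s<T. ln (Z s)) \<le> ln (real N) + eta * (\<Sum>s<T. l s (E s j))"
      using tele[OF j, of T] by linarith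
    have "(\<Sum>t<T. A t) + (\<Sum>t<T. ln (Z t)) / eta \<le> (\<Sum>t<T. R t)"
      using sum_mono[of "{..<T}" "\<lambda>t. A t + ln (Z t) / eta" R] rnd
      by (simp add: sum.distrib sum_divide_distrib)
    moreover have "- ((\<Sum>s<T. ln (Z s)) / eta) \<le> (ln (real N) + eta * (\<Sum>s<T. l s (E s j))) / eta"
      using divide_right_mono[OF L, of eta] assms(1) by simp
    moreover have "(ln (real N) + eta * (\<Sum>s<T. l s (E s j))) / eta = ln (real N) / eta + (\<Sum>s<T. l s (E s j))"
      using assms(1) by (simp add: field_simps)
    ultimately show ?thesis by linarith
  qed
  have "(\<Sum>t<T. A t) - (ln (real N) / eta + (\<Sum>t<T. R t)) \<le> (INF j\<in>{..<N}. \<Sum>t<T. l t (E t j))"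
    using assms(3) key by (intro cINF_greatest) (auto simp: algebra_simps lessThan_empty_iff)
  moreover have "(\<Sum>t<T. R t) = eta * (\<Sum>t<T. l t True) + eta * (\<Sum>t<T. p t * (1 - p t) * (l t False)^2)
      + eta * (\<Sum>t<T. p t * (l t True)^2)"
    by (simp add: R_def sum.distrib sum_distrib_left)
  ultimately show ?thesis unfolding A_def p_def l_def by simp
qed
end
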